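(* Let $\Delta$ be a tight SID and $\phi$ a tight sentence over $\Delta$. For every model $(\alpha,m)$ of $\phi$ (i.e. $(\alpha,m)\models_\Delta\phi$), the architecture $\alpha$ is tight.
   Context: Signature $\Sigma=(\mathfrak C,\mathfrak I,\mathfrak P)$: component types $\mathfrak C$, interaction types $\mathfrak I$ with arities $\#(\mathsf I)$, pairwise disjoint port sets $\mathfrak P(\mathsf C)$, port tuples $\mathfrak P(\mathsf I)$ of length $\#(\mathsf I)$; $\langle\mathfrak P(\mathsf I)\rangle_k$ is its $k$-th port. An architecture $\alpha$ gives $\alpha(\mathsf C)\subseteq\mathbb U$, $\alpha(\mathsf I)\subseteq\mathbb U^{\#(\mathsf I)}$. CL formulas $\phi::=\mathsf{emp}\mid\mathsf C(x)\mid\mathsf C^q(x)\mid\mathsf I(x_1..x_k)\mid\mathsf A(x_1..x_n)\mid\phi*\phi\mid\exists x.\phi$; SID = finite set of rules $\mathsf A(x_1..x_n)\leftarrow\phi$ with $\mathrm{fv}(\phi)=\{x_1..x_n\}$; $(\alpha,m)\models^s_\Delta\phi$ is the least relation where atoms $\mathsf C(x)$/$\mathsf C^q(x)$ denote the single component $\mathsf C[s(x)]$ with marking $\{q[s(x)]\}$ (for some/the given state $q$), $\mathsf I(\vec x)$ the single interaction $\mathsf I[s(\vec x)]$ with empty marking, $\mathsf{emp}$ the empty configuration, predicate atoms unfold by rules, $*$ is union of configurations with disjoint component sets and disjoint interaction relations, and $\exists$ chooses a value. An architecture $\alpha$ is tight if for each $\langle u_1..u_k\rangle\in\alpha(\mathsf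 I)$ and each $k'\in[1,k]$, $u_{k'}\in\alpha(\mathsf C)$ for the unique $\mathsf C$ with $\langle\mathfrak P(\mathsf I)\rangle_{k'}\in\mathfrak P(\mathsf C)$. A profile $\lambda$ maps each predicate symbol $\mathsf A$ of nonzero arity to a tuple of component types of length $\#(\mathsf A)$. A formula $\phi$ is tight for $\lambda$ if for every interaction atom $\mathsf I(x_1..x_k)$ of $\phi$ and every $j\in[1,k]$, $\phi$ contains a component atom $\mathsf C^q(x_j)$ with $\langle\mathfrak P(\mathsf I)\rangle_j\in\mathfrak P(\mathsf C)$, or a predicate atom $\mathsf A(y_1..y_n)$ with $x_j=y_\ell$ and $\langle\mathfrak P(\mathsf I)\rangle_j\in\mathfrak P(\langle\lambda(\mathsf A)\rangle_\ell)$ for some $\ell$. A SID $\Delta$ is tight if there is a profile $\lambda_\Delta$ such that for each rule $\mathsf A(x_1..x_n)\leftarrow\phi$, $\phi$ is tight for $\lambda_\Delta$ and for each $j\in[1,n]$, $\phi$ contains a component atom $\mathsf C^q(x_j)$ with $\langle\lambda_\Delta(\mathsf A)\rangle_j=\mathsf C$, or a predicate atom $\mathsf B(y_1..y_r)$ with $x_j=y_\ell$ and $\langle\lambda_\Delta(\mathsf A)\rangle_j=\langle\lambda_\Delta(\mathsf B)\rangle_\ell$ for some $\ell$. A formula over a tight SID $\Delta$ is tight if it is tight for $\lambda_\Delta$. *)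

theory Defs
  imports Main
begin

record ('c, 'i, 'p, 'q) signature =
  comps  :: "'c set"
  inters :: "'i set"
  iarity :: "'i \<Rightarrow> nat"
  cports :: "'c \<Rightarrow> 'p set"
  iports :: "'i \<Rightarrow> 'p list"
  cstates :: "'c \<Rightarrow> 'q set"

definition wf_sig :: "('c, 'i, 'p, 'q) signature \<Rightarrow> bool" where
  "wf_sig S \<longleftrightarrow>
     (\<forall>C1\<in>comps S. \<forall>C2\<in>comps S. C1 \<noteq> C2 \<longrightarrow> cports S C1 \<inter> cports S C2 = {}) \<and>
     (\<forall>I\<in>inters S. length (iports S I) = iarity S I) \<and>
     (\<forall>I\<in>inters S. \<forall>p\<in>set (iports S I). \<exists>C\<in>comps S. p \<in> cports S C)"

record ('c, 'i, 'u) arch =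
  acomp :: "'c \<Rightarrow> 'u set"
  ainter :: "'i \<Rightarrow> 'u list set"

definition is_arch :: "('c, 'i, 'p, 'q) signature \<Rightarrow> ('c, 'i, 'u) arch \<Rightarrow> bool" where
  "is_arch S \<alpha> \<longleftrightarrow>
     (\<forall>C. C \<notin> comps S \<longrightarrow> acomp \<alpha> C = {}) \<and>
     (\<forall>I. I \<notin> inters S \<longrightarrow> ainter \<alpha> I = {}) \<and>
     (\<forall>I\<in>inters S. \<forall>t\<in>ainter \<alpha> I. length t = iarity S I)"

definition tight_arch :: "('c, 'i, 'p, 'q) signature \<Rightarrow> ('c, 'i, 'u) arch \<Rightarrow> bool" where
  "tight_arch S \<alpha> \<longleftrightarrow>
     (\<forall>I\<in>inters S. \<forall>t\<in>ainter \<alpha> I. \<forall>k<length t. \<forall>C\<in>comps S.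
        k < length (iports S I) \<longrightarrow> iports S I ! k \<in> cports S C \<longrightarrow> t ! k \<in> acomp \<alpha> C)"

definition empty_arch :: "('c, 'i, 'u) arch" where
  "empty_arch = \<lparr>acomp = (\<lambda>_. {}), ainter = (\<lambda>_. {})\<rparr>"

definition comp_arch :: "'c \<Rightarrow> 'u \<Rightarrow> ('c, 'i, 'u) arch" where
  "comp_arch C u = \<lparr>acomp = (\<lambda>_. {})(C := {u}), ainter = (\<lambda>_. {})\<rparr>"

definition inter_arch :: "'i \<Rightarrow> 'u list \<Rightarrow> ('c, 'i, 'u) arch" where
  "inter_arch I t = \<lparr>acomp = (\<lambda>_. {}), ainter = (\<lambda>_. {})(I := {t})\<rparr>"

definition arch_union :: "('c, 'i, 'u) arch \<Rightarrow> ('c, 'i, 'u) arch \<Rightarrow> ('c, 'i, 'u) arch" where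
  "arch_union a b = \<lparr>acomp = (\<lambda>C. acomp a C \<union> acomp b C),
                     ainter = (\<lambda>I. ainter a I \<union> ainter b I)\<rparr>"

text \<open>Disjoint component sets (components are pairs C[u]) and disjoint interaction relations.\<close>
definition arch_disjoint :: "('c, 'i, 'u) arch \<Rightarrow> ('c, 'i, 'u) arch \<Rightarrow> bool" where
  "arch_disjoint a b \<longleftrightarrow>
     (\<forall>C. acomp a C \<inter> acomp b C = {}) \<and> (\<forall>I. ainter a I \<inter> ainter b I = {})"

datatype ('c, 'i, 'q, 'a, 'v) form =
    Emp
  | Comp 'c 'v
  | CompQ 'c 'q 'v
  | Inter 'i "'v list"
  | Pred 'a "'v list"
  | Sep "('c, 'i, 'q, 'a, 'v) form" "('c, 'i, 'q, 'a, 'v) form"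
  | Ex 'v "('c, 'i, 'q, 'a, 'v) form"

fun fv :: "('c, 'i, 'q, 'a, 'v) form \<Rightarrow> 'v set" where
  "fv Emp = {}"
| "fv (Comp C x) = {x}"
| "fv (CompQ C q x) = {x}"
| "fv (Inter I xs) = set xs"
| "fv (Pred A xs) = set xs"
| "fv (Sep f g) = fv f \<union> fv g"
| "fv (Ex x f) = fv f - {x}"

fun bvs :: "('c, 'i, 'q, 'a, 'v) form \<Rightarrow> 'v list" where
  "bvs (Sep f g) = bvs f @ bvs g"
| "bvs (Ex x f) = x # bvs f"
| "bvs _ = []"

fun atoms :: "('c, 'i, 'q, 'a, 'v) form \<Rightarrow> ('c, 'i, 'q, 'a, 'v) form set" where
  "atoms (Sep f g) = atoms f \<union> atoms g"
| "atoms (Ex x f) = atoms f"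
| "atoms f = {f}"

text \<open>Standard variable convention: bound variables are pairwise distinct and
  distinct from the free variables (so that "contains an atom with variable x"
  refers to the same variable occurrence scope).\<close>
definition clean :: "('c, 'i, 'q, 'a, 'v) form \<Rightarrow> bool" where
  "clean f \<longleftrightarrow> distinct (bvs f) \<and> set (bvs f) \<inter> fv f = {}"

fun wf_form :: "('c, 'i, 'p, 'q) signature \<Rightarrow> ('a \<Rightarrow> nat) \<Rightarrow> ('c, 'i, 'q, 'a, 'v) form \<Rightarrow> bool" where
  "wf_form S par Emp = True"
| "wf_form S par (Comp C x) = (C \<in> comps S)"
| "wf_form S par (CompQ C q x) = (C \<in> comps S \<and> q \<in> cstates S C)"
| "wf_form S par (Inter I xs) = (I \<in> inters S \<and> length xs = iarity S I)"
| "wf_form S par (Pred A xs) = (length xs = par A)"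
| "wf_form S par (Sep f g) = (wf_form S par f \<and> wf_form S par g)"
| "wf_form S par (Ex x f) = wf_form S par f"

type_synonym ('c, 'i, 'q, 'a, 'v) sid = "('a \<times> 'v list \<times> ('c, 'i, 'q, 'a, 'v) form) set"

text \<open>A rule (A, [x1..xn], phi) stands for A(x1..xn) <- phi; par gives the arities #(A).\<close>
definition wf_sid :: "('c, 'i, 'p, 'q) signature \<Rightarrow> ('a \<Rightarrow> nat) \<Rightarrow> ('c, 'i, 'q, 'a, 'v) sid \<Rightarrow> bool" where
  "wf_sid S par D \<longleftrightarrow> finite D \<and>
     (\<forall>(A, xs, f)\<in>D. distinct xs \<and> length xs = par A \<and> fv f = set xs \<and>
                     wf_form S par f \<and> clean f)"

inductive sat :: "('c, 'i, 'p, 'q) signature \<Rightarrow> ('c, 'i, 'q, 'a, 'v) sid \<Rightarrow>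
    ('c, 'i, 'u) arch \<Rightarrow> ('q \<times> 'u) set \<Rightarrow> ('v \<Rightarrow> 'u) \<Rightarrow> ('c, 'i, 'q, 'a, 'v) form \<Rightarrow> bool"
  for S D where
  sat_emp: "sat S D empty_arch {} s Emp"
| sat_comp: "q \<in> cstates S C \<Longrightarrow> sat S D (comp_arch C (s x)) {(q, s x)} s (Comp C x)"
| sat_compq: "sat S D (comp_arch C (s x)) {(q, s x)} s (CompQ C q x)"
| sat_inter: "sat S D (inter_arch I (map s xs)) {} s (Inter I xs)"
| sat_pred: "\<lbrakk>(A, xs, f) \<in> D; length ys = length xs;
              \<forall>i<length xs. s' (xs ! i) = s (ys ! i); sat S D \<alpha> m s' f\<rbrakk>
             \<Longrightarrow> sat S D \<alpha> m s (Pred A ys)"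
| sat_sep: "\<lbrakk>sat S D \<alpha>1 m1 s f; sat S D \<alpha>2 m2 s g; arch_disjoint \<alpha>1 \<alpha>2\<rbrakk>
             \<Longrightarrow> sat S D (arch_union \<alpha>1 \<alpha>2) (m1 \<union> m2) s (Sep f g)"
| sat_ex: "sat S D \<alpha> m (s(x := u)) f \<Longrightarrow> sat S D \<alpha> m s (Ex x f)"

definition has_comp_atom :: "('c, 'i, 'q, 'a, 'v) form \<Rightarrow> 'c \<Rightarrow> 'v \<Rightarrow> bool" where
  "has_comp_atom f C x \<longleftrightarrow> Comp C x \<in> atoms f \<or> (\<exists>q. CompQ C q x \<in> atoms f)"

definition is_profile :: "('c, 'i, 'p, 'q) signature \<Rightarrow> ('a \<Rightarrow> nat) \<Rightarrow> ('a \<Rightarrow> 'c list) \<Rightarrow> bool" where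
  "is_profile S par lam \<longleftrightarrow> (\<forall>A. length (lam A) = par A \<and> set (lam A) \<subseteq> comps S)"

definition tight_for :: "('c, 'i, 'p, 'q) signature \<Rightarrow> ('a \<Rightarrow> 'c list) \<Rightarrow>
    ('c, 'i, 'q, 'a, 'v) form \<Rightarrow> bool" where
  "tight_for S lam f \<longleftrightarrow>
     (\<forall>I xs. Inter I xs \<in> atoms f \<longrightarrow> (\<forall>j<length xs.
        (\<exists>C\<in>comps S. has_comp_atom f C (xs ! j) \<and> iports S I ! j \<in> cports S C) \<or>
        (\<exists>A ys l. Pred A ys \<in> atoms f \<and> l < length ys \<and> xs ! j = ys ! l \<and>
                  iports S I ! j \<in> cports S (lam A ! l))))"

definition tight_sid_with :: "('c, 'i, 'p, 'q) signature \<Rightarrow> ('a \<Rightarrow> nat) \<Rightarrow> ('a \<Rightarrow> 'c list) \<Rightarrow>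
    ('c, 'i, 'q, 'a, 'v) sid \<Rightarrow> bool" where
  "tight_sid_with S par lam D \<longleftrightarrow> is_profile S par lam \<and>
     (\<forall>(A, xs, f)\<in>D. tight_for S lam f \<and>
        (\<forall>j<length xs.
          has_comp_atom f (lam A ! j) (xs ! j) \<or>
          (\<exists>B ys l. Pred B ys \<in> atoms f \<and> l < length ys \<and> xs ! j = ys ! l \<and>
                    lam A ! j = lam B ! l)))"

definition tight_sid :: "('c, 'i, 'p, 'q) signature \<Rightarrow> ('a \<Rightarrow> nat) \<Rightarrow>
    ('c, 'i, 'q, 'a, 'v) sid \<Rightarrow> bool" where
  "tight_sid S par D \<longleftrightarrow> (\<exists>lam. tight_sid_with S par lam D)"

end

theory Submission
  imports Defs
begin

definition tight_at :: "('c, 'i, 'p, 'q) signature \<Rightarrow> ('c, 'i, 'u) arch \<Rightarrow> 'i \<Rightarrow> 'u list \<Rightarrow> bool" where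
  "tight_at S \<alpha> I t \<longleftrightarrow> (\<forall>k<length t. \<forall>C\<in>comps S.
        k < length (iports S I) \<longrightarrow> iports S I ! k \<in> cports S C \<longrightarrow> t ! k \<in> acomp \<alpha> C)"

definition good where
  "good S lam \<alpha> s' f \<longleftrightarrow>
    (\<forall>C x. has_comp_atom f C x \<longrightarrow> s' x \<in> acomp \<alpha> C) \<and>
    (\<forall>A ys. Pred A ys \<in> atoms f \<longrightarrow> (\<forall>j<length ys. s' (ys ! j) \<in> acomp \<alpha> (lam A ! j))) \<and>
    (\<forall>I. \<forall>t\<in>ainter \<alpha> I. (\<exists>xs. Inter I xs \<in> atoms f \<and> t = map s' xs) \<or> tight_at S \<alpha> I t)"

lemma pred_len: "wf_form S par f \<Longrightarrow> Pred B zs \<in> atoms f \<Longrightarrow> length zs = par B"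
  by (induction f) auto

lemma vars_inter: "Inter I xs \<in> atoms f \<Longrightarrow> set xs \<subseteq> fv f \<union> set (bvs f)"
  by (induction f) auto

lemma vars_pred: "Pred A xs \<in> atoms f \<Longrightarrow> set xs \<subseteq> fv f \<union> set (bvs f)"
  by (induction f) auto

lemma vars_comp: "has_comp_atom f C x \<Longrightarrow> x \<in> fv f \<union> set (bvs f)"
  unfolding has_comp_atom_def by (induction f) auto

lemma closing:
  assumes sig: "wf_sig S" and prof: "is_profile S par lam" and wf: "wf_form S par f"
    and tf: "tight_for S lam f" and g: "good S lam \<alpha> s' f"
  shows "\<forall>I. \<forall>t\<in>ainter \<alpha> I. tight_at S \<alpha> I t"
proof (intro allI ballI)
  fix I t assume t: "t \<in> ainter \<alpha> I"
  from g t have "(\<exists>xs. Inter I xs \<in> atoms f \<and> t = map s' xs) \<or> tight_at S \<alpha> I t"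
    unfolding good_def by blast
  then show "tight_at S \<alpha> I t"
  proof
    assume "\<exists>xs. Inter I xs \<in> atoms f \<and> t = map s' xs"
    then obtain xs where xs: "Inter I xs \<in> atoms f" "t = map s' xs" by blast
    show ?thesis unfolding tight_at_def
    proof (intro allI impI ballI)
      fix k C assume k: "k < length t" and C: "C \<in> comps S" and k2: "k < length (iports S I)"
        and p: "iports S I ! k \<in> cports S C"
      have kx: "k < length xs" using k xs by simp
      have tk: "t ! k = s' (xs ! k)" using xs kx by simp
      from tf xs(1) kx have
        "(\<exists>C'\<in>comps S. has_comp_atom f C' (xs ! k) \<and> iports S I ! k \<in> cports S C') \<or>
         (\<exists>A ys l. Pred A ys \<in> atoms f \<and> l < length ys \<and> xs ! k = ys ! l \<and>
                  iports S I ! k \<in> cports S (lam A ! l))"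
        unfolding tight_for_def by blast
      then show "t ! k \<in> acomp \<alpha> C"
      proof
        assume "\<exists>C'\<in>comps S. has_comp_atom f C' (xs ! k) \<and> iports S I ! k \<in> cports S C'"
        then obtain C' where C': "C' \<in> comps S" "has_comp_atom f C' (xs ! k)" "iports S I ! k \<in> cports S C'"
          by blast
        have "C' = C" using sig C C' p unfolding wf_sig_def by blast
        then show ?thesis using g C' tk unfolding good_def by auto
      next
        assume "\<exists>A ys l. Pred A ys \<in> atoms f \<and> l < length ys \<and> xs ! k = ys ! l \<and>
                  iports S I ! k \<in> cports S (lam A ! l)"
        then obtain A ys l where A: "Pred A ys \<in> atoms f" "l < length ys" "xs ! k = ys ! l"
          "iports S I ! k \<in> cports S (lam A ! l)" by blast
        have "length ys = par A" using pred_len[OF wf A(1)] .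
        then have "lam A ! l \<in> comps S" using prof A(2) unfolding is_profile_def
          by (metis nth_mem subsetD)
        then have "lam A ! l = C" using sig C A(4) p unfolding wf_sig_def by blast
        then show ?thesis using g A tk unfolding good_def by auto
      qed
    qed
  qed auto
qed


lemma clean_sep: "clean (Sep f g) \<Longrightarrow> clean f \<and> clean g"
  unfolding clean_def by auto

lemma clean_ex: "clean (Ex x f) \<Longrightarrow> clean f"
  unfolding clean_def by auto

lemma main:
  assumes sig: "wf_sig S" and sid: "wf_sid S par D" and tsid: "tight_sid_with S par lam D"
  shows "sat S D \<alpha> m s f \<Longrightarrow>
    (\<forall>A ys. f = Pred A ys \<longrightarrow> (\<forall>I. \<forall>t\<in>ainter \<alpha> I. tight_at S \<alpha> I t) \<and>
                  (\<forall>j<length ys. s (ys ! j) \<in> acomp \<alpha> (lam A ! j))) \<and>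
    (clean f \<longrightarrow> (\<exists>s'. (\<forall>x. x \<notin> set (bvs f) \<longrightarrow> s' x = s x) \<and> good S lam \<alpha> s' f))"
proof (induction rule: sat.induct)
  case (sat_emp s)
  show ?case unfolding good_def has_comp_atom_def empty_arch_def by auto
next
  case (sat_comp q C s x)
  show ?case unfolding good_def has_comp_atom_def comp_arch_def by auto
next
  case (sat_compq C s x q)
  show ?case unfolding good_def has_comp_atom_def comp_arch_def by auto
next
  case (sat_inter I s xs)
  show ?case unfolding good_def has_comp_atom_def inter_arch_def by auto
next
  case (sat_pred A xs f ys s' s \<alpha> m)
  have r: "distinct xs" "length xs = par A" "fv f = set xs" "wf_form S par f" "clean f"
    using sid sat_pred.hyps(1) unfolding wf_sid_def by auto
  have tr: "tight_for S lam f" "is_profile S par lam"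
    "\<forall>j<length xs. has_comp_atom f (lam A ! j) (xs ! j) \<or>
          (\<exists>B ys l. Pred B ys \<in> atoms f \<and> l < length ys \<and> xs ! j = ys ! l \<and>
                    lam A ! j = lam B ! l)"
    using tsid sat_pred.hyps(1) unfolding tight_sid_with_def by auto
  from sat_pred.IH r(5) obtain s'' where s'': "\<forall>x. x \<notin> set (bvs f) \<longrightarrow> s'' x = s' x"
    "good S lam \<alpha> s'' f" by blast
  have T: "\<forall>I. \<forall>t\<in>ainter \<alpha> I. tight_at S \<alpha> I t"
    using closing[OF sig tr(2) r(4) tr(1) s''(2)] .
  have P: "\<forall>j<length ys. s (ys ! j) \<in> acomp \<alpha> (lam A ! j)"
  proof (intro allI impI)
    fix j assume j: "j < length ys"
    then have jx: "j < length xs" using sat_pred.hyps(2) by simp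
    have "xs ! j \<in> fv f" using r(3) jx by simp
    then have "xs ! j \<notin> set (bvs f)" using r(5) unfolding clean_def by blast
    then have e: "s'' (xs ! j) = s (ys ! j)" using s''(1) sat_pred.hyps(3) jx by simp
    from tr(3) jx have "has_comp_atom f (lam A ! j) (xs ! j) \<or>
          (\<exists>B ys l. Pred B ys \<in> atoms f \<and> l < length ys \<and> xs ! j = ys ! l \<and>
                    lam A ! j = lam B ! l)" by blast
    then show "s (ys ! j) \<in> acomp \<alpha> (lam A ! j)"
    proof
      assume "has_comp_atom f (lam A ! j) (xs ! j)"
      then show ?thesis using s''(2) e unfolding good_def by metis
    next
      assume "\<exists>B ys l. Pred B ys \<in> atoms f \<and> l < length ys \<and> xs ! j = ys ! l \<and>
                    lam A ! j = lam B ! l"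
      then obtain B zs l where "Pred B zs \<in> atoms f" "l < length zs" "xs ! j = zs ! l"
         "lam A ! j = lam B ! l" by blast
      then show ?thesis using s''(2) e unfolding good_def by metis
    qed
  qed
  show ?case
  proof (intro conjI allI impI)
    show "\<exists>s'. (\<forall>x. x \<notin> set (bvs (Pred A ys)) \<longrightarrow> s' x = s x) \<and> good S lam \<alpha> s' (Pred A ys)"
      using T P unfolding good_def has_comp_atom_def by (intro exI[of _ s]) auto
  qed (use T P in auto)
next
  case (sat_sep \<alpha>1 m1 s f \<alpha>2 m2 g)
  show ?case
  proof (intro conjI allI impI)
    assume c: "clean (Sep f g)"
    then have cf: "clean f" and cg: "clean g" using clean_sep by auto
    from sat_sep.IH(1) cf obtain s1 where s1: "\<forall>x. x \<notin> set (bvs f) \<longrightarrow> s1 x = s x"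
      "good S lam \<alpha>1 s1 f" by blast
    from sat_sep.IH(2) cg obtain s2 where s2: "\<forall>x. x \<notin> set (bvs g) \<longrightarrow> s2 x = s x"
      "good S lam \<alpha>2 s2 g" by blast
    define s' where "s' = (\<lambda>x. if x \<in> set (bvs f) then s1 x else s2 x)"
    have dis: "set (bvs f) \<inter> set (bvs g) = {}" "set (bvs f) \<inter> (fv f \<union> fv g) = {}"
      "set (bvs g) \<inter> (fv f \<union> fv g) = {}" using c unfolding clean_def by auto
    have A1: "s' x = s1 x" if "x \<in> fv f \<union> set (bvs f)" for x
      using that dis s1(1) s2(1) unfolding s'_def by auto
    have A2: "s' x = s2 x" if "x \<in> fv g \<union> set (bvs g)" for x
      using that dis s1(1) s2(1) unfolding s'_def by auto
    have M1: "map s' xs = map s1 xs" if "set xs \<subseteq> fv f \<union> set (bvs f)" for xs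
      using that A1 by (auto intro: map_cong)
    have M2: "map s' xs = map s2 xs" if "set xs \<subseteq> fv g \<union> set (bvs g)" for xs
      using that A2 by (auto intro: map_cong)
    have tu1: "tight_at S (arch_union \<alpha>1 \<alpha>2) I t" if "tight_at S \<alpha>1 I t" for I t
      using that unfolding tight_at_def arch_union_def by auto
    have tu2: "tight_at S (arch_union \<alpha>1 \<alpha>2) I t" if "tight_at S \<alpha>2 I t" for I t
      using that unfolding tight_at_def arch_union_def by auto
    have g: "good S lam (arch_union \<alpha>1 \<alpha>2) s' (Sep f g)"
      unfolding good_def
    proof (intro conjI allI impI ballI)
      fix C x assume "has_comp_atom (Sep f g) C x"
      then have "has_comp_atom f C x \<or> has_comp_atom g C x" unfolding has_comp_atom_def by auto
      then show "s' x \<in> acomp (arch_union \<alpha>1 \<alpha>2) C"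
      proof
        assume h: "has_comp_atom f C x"
        then show ?thesis using s1(2) A1[OF vars_comp[OF h]] unfolding good_def arch_union_def by auto
      next
        assume h: "has_comp_atom g C x"
        then show ?thesis using s2(2) A2[OF vars_comp[OF h]] unfolding good_def arch_union_def by auto
      qed
    next
      fix A ys j assume "Pred A ys \<in> atoms (Sep f g)" and j: "j < length ys"
      then have "Pred A ys \<in> atoms f \<or> Pred A ys \<in> atoms g" by auto
      then show "s' (ys ! j) \<in> acomp (arch_union \<alpha>1 \<alpha>2) (lam A ! j)"
      proof
        assume h: "Pred A ys \<in> atoms f"
        have "ys ! j \<in> fv f \<union> set (bvs f)" using vars_pred[OF h] j nth_mem by blast
        then show ?thesis using s1(2) h j A1 unfolding good_def arch_union_def by auto
      next
        assume h: "Pred A ys \<in> atoms g"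
        have "ys ! j \<in> fv g \<union> set (bvs g)" using vars_pred[OF h] j nth_mem by blast
        then show ?thesis using s2(2) h j A2 unfolding good_def arch_union_def by auto
      qed
    next
      fix I t assume "t \<in> ainter (arch_union \<alpha>1 \<alpha>2) I"
      then have "t \<in> ainter \<alpha>1 I \<or> t \<in> ainter \<alpha>2 I" unfolding arch_union_def by auto
      then show "(\<exists>xs. Inter I xs \<in> atoms (Sep f g) \<and> t = map s' xs) \<or> tight_at S (arch_union \<alpha>1 \<alpha>2) I t"
      proof
        assume t: "t \<in> ainter \<alpha>1 I"
        then have "(\<exists>xs. Inter I xs \<in> atoms f \<and> t = map s1 xs) \<or> tight_at S \<alpha>1 I t"
          using s1(2) unfolding good_def by blast
        then show ?thesis
        proof
          assume "\<exists>xs. Inter I xs \<in> atoms f \<and> t = map s1 xs"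
          then obtain xs where xs: "Inter I xs \<in> atoms f" "t = map s1 xs" by blast
          have "t = map s' xs" using M1[OF vars_inter[OF xs(1)]] xs(2) by simp
          then show ?thesis using xs(1) by auto
        qed (rule disjI2, erule tu1)
      next
        assume t: "t \<in> ainter \<alpha>2 I"
        then have "(\<exists>xs. Inter I xs \<in> atoms g \<and> t = map s2 xs) \<or> tight_at S \<alpha>2 I t"
          using s2(2) unfolding good_def by blast
        then show ?thesis
        proof
          assume "\<exists>xs. Inter I xs \<in> atoms g \<and> t = map s2 xs"
          then obtain xs where xs: "Inter I xs \<in> atoms g" "t = map s2 xs" by blast
          have "t = map s' xs" using M2[OF vars_inter[OF xs(1)]] xs(2) by simp
          then show ?thesis using xs(1) by auto
        qed (rule disjI2, erule tu2)
      qed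
    qed
    have "\<forall>x. x \<notin> set (bvs (Sep f g)) \<longrightarrow> s' x = s x"
      using s1(1) s2(1) unfolding s'_def by auto
    then show "\<exists>s'. (\<forall>x. x \<notin> set (bvs (Sep f g)) \<longrightarrow> s' x = s x) \<and> good S lam (arch_union \<alpha>1 \<alpha>2) s' (Sep f g)"
      using g by blast
  qed auto
next
  case (sat_ex \<alpha> m s x u f)
  show ?case
  proof (intro conjI allI impI)
    assume c: "clean (Ex x f)"
    then have cf: "clean f" by (rule clean_ex)
    from sat_ex.IH cf obtain s' where s': "\<forall>y. y \<notin> set (bvs f) \<longrightarrow> s' y = (s(x := u)) y"
      "good S lam \<alpha> s' f" by blast
    have "\<forall>y. y \<notin> set (bvs (Ex x f)) \<longrightarrow> s' y = s y" using s'(1) by auto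
    moreover have "good S lam \<alpha> s' (Ex x f)" using s'(2) unfolding good_def has_comp_atom_def by simp
    ultimately show "\<exists>s'. (\<forall>y. y \<notin> set (bvs (Ex x f)) \<longrightarrow> s' y = s y) \<and> good S lam \<alpha> s' (Ex x f)"
      by blast
  qed auto
qed

theorem mainTheorem7:
  fixes S :: "('c, 'i, 'p, 'q) signature"
    and par :: "'a \<Rightarrow> nat"
    and D :: "('c, 'i, 'q, 'a, 'v) sid"
    and lam :: "'a \<Rightarrow> 'c list"
    and phi :: "('c, 'i, 'q, 'a, 'v) form"
    and \<alpha> :: "('c, 'i, 'u) arch"
    and m :: "('q \<times> 'u) set"
    and s :: "'v \<Rightarrow> 'u"
  assumes "wf_sig S"
    and "wf_sid S par D"
    and "tight_sid_with S par lam D"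
    and "wf_form S par phi" and "clean phi" and "fv phi = {}"
    and "tight_for S lam phi"
    and "is_arch S \<alpha>"
    and "sat S D \<alpha> m s phi"
  shows "tight_arch S \<alpha>"
proof -
  from main[OF assms(1,2,3) assms(9)] assms(5) obtain s' where g: "good S lam \<alpha> s' phi" by blast
  have prof: "is_profile S par lam" using assms(3) unfolding tight_sid_with_def by auto
  have "\<forall>I. \<forall>t\<in>ainter \<alpha> I. tight_at S \<alpha> I t" using closing[OF assms(1) prof assms(4) assms(7) g] .
  then show ?thesis unfolding tight_arch_def tight_at_def by blast
qed

end
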